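(* Let $J=JCK(Z,\delta)$ and $K=Z\oplus Zx$. Then: (i) every odd derivation of $J$ is inner, $\mathrm{Der}(J)_{\bar1}=\mathrm{Inder}(J)_{\bar1}$; (ii) the restriction map $\mathrm{Der}(J)^{[\bar0,\bar0]}\to\mathrm{Der}(K)$, $\partial\mapsto\partial|_K$, is injective with image $\overline{\mathrm{Der}}(K)$; (iii) $\dim_{\mathbb F}\mathrm{Der}(J)_{\bar1}=4\dim_{\mathbb F}Z=\dim_{\mathbb F}J_{\bar1}$ (dimensions as cardinals).
   Context: Let $\mathbb F$ be a field of characteristic $\neq 2$, $Z$ a unital commutative associative $\mathbb F$-algebra, and $\delta$ a derivation of $Z$ such that $Z\delta(Z)=Z$ (the $\mathbb F$-span of all products $f\delta(g)$, $f,g\in Z$, is $Z$). The Cheng-Kac Jordan superalgebra $J=JCK(Z,\delta)=J_{\bar0}\oplus J_{\bar1}$ is defined as follows: $J_{\bar0}=Z1\oplus Zw_1\oplus Zw_2\oplus Zw_3$ and $J_{\bar1}=Zx\oplus Zx_1\oplus Zx_2\oplus Zx_3$ are free $Z$-modules of rank 4; $J_{\bar0}$ is the $Z$-algebra $(\mathbb F1\oplus\mathbb Fw_1\oplus\mathbb Fw_2\oplus\mathbb Fw_3)\otimes_{\mathbb F}Z$ with $1$ the identity, $w_1^2=w_2^2=1$, $w_3^2=-1$, $w_iw_j=0$ for $i\ne j$. For $f,g\in Z$ and $i,j\in\{1,2,3\}$ the remaining products are: $f(gx)=(fg)x$, $f(gx_j)=(fg)x_j$, $(fw_i)(gx)=(\delta(f)g)x_i$,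 $(fw_i)(gx_j)=-(fg)x_{i\times j}$, $(fx)(gx)=\delta(f)g-f\delta(g)$, $(fx)(gx_j)=-(fg)w_j$, $(fx_i)(gx)=(fg)w_i$, $(fx_i)(gx_j)=0$, extended by supercommutativity ($ab=(-1)^{|a||b|}ba$), where $x_{1\times2}=-x_{2\times1}=x_3$, $x_{1\times3}=-x_{3\times1}=x_2$, $x_{3\times2}=-x_{2\times3}=x_1$, $x_{i\times i}=0$. $J$ is $\mathbb Z_2^2$-graded by $J^{[\bar0,\bar0]}=Z\oplus Zx$, $J^{[\bar1,\bar0]}=Zw_1\oplus Zx_1$, $J^{[\bar0,\bar1]}=Zw_2\oplus Zx_2$, $J^{[\bar1,\bar1]}=Zw_3\oplus Zx_3$, and $\mathrm{Der}(J)^{\alpha}$ denotes the derivations mapping each $J^{\beta}$ into $J^{\alpha+\beta}$. Derivations are super derivations; $D(a,b)$ is $c\mapsto a(bc)-(-1)^{|a||b|}b(ac)$ and $\mathrm{Inder}$ is the span of all $D(a,b)$. $K=Z\oplus Zx$ is a subalgebra of $J$. For $a\in Z$, $\eta_a$ is the odd derivation of $K$ with $\eta_a(Z)=0$, $\eta_a(x)=a$. $\overline{\mathrm{Der}}(K)$ denotes the subalgebra $\mathrm{Der}(K)_{\bar0}\oplus\{\eta_a:a\in Z\}$ of $\mathrm{Der}(K)$. *)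

theory Defs
  imports Main "HOL.Vector_Spaces" "HOL-Library.Function_Algebras" "HOL-Library.Equipollence"
begin

text \<open>An element of J is
  a function from the eight free Z-module generators to Z (its coordinates):
  One (=1), W i (=w_i), X (=x), Xi i (=x_i), for i in {1,2,3}.\<close>

datatype idx = I1 | I2 | I3
datatype cb = One | W idx | X | Xi idx

type_synonym 'z jck = "cb \<Rightarrow> 'z"

definition cbs :: "cb set" where
  "cbs = {One, W I1, W I2, W I3, X, Xi I1, Xi I2, Xi I3}"

definition single :: "cb \<Rightarrow> 'z::zero \<Rightarrow> 'z jck" where
  "single e f = (\<lambda>k. if k = e then f else 0)"

fun wsq :: "idx \<Rightarrow> 'z::comm_ring_1" where
  "wsq I1 = 1" | "wsq I2 = 1" | "wsq I3 = -1"

fun xcross :: "idx \<Rightarrow> idx \<Rightarrow> 'z::comm_ring_1 \<Rightarrow> 'z jck" where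
  "xcross I1 I2 f = single (Xi I3) f"
| "xcross I2 I1 f = single (Xi I3) (- f)"
| "xcross I1 I3 f = single (Xi I2) f"
| "xcross I3 I1 f = single (Xi I2) (- f)"
| "xcross I3 I2 f = single (Xi I1) f"
| "xcross I2 I3 f = single (Xi I1) (- f)"
| "xcross I1 I1 f = 0"
| "xcross I2 I2 f = 0"
| "xcross I3 I3 f = 0"

text \<open>bprod d f e g e' is the product (f e)(g e') of the generator multiples,
  as given in the definition (odd-even products by supercommutativity).\<close>
fun bprod :: "('z::comm_ring_1 \<Rightarrow> 'z) \<Rightarrow> 'z \<Rightarrow> cb \<Rightarrow> 'z \<Rightarrow> cb \<Rightarrow> 'z jck" where
  "bprod d f One g e' = single e' (f * g)"
| "bprod d f (W i) g One = single (W i) (f * g)"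
| "bprod d f (W i) g (W j) = (if i = j then single One (wsq i * (f * g)) else 0)"
| "bprod d f (W i) g X = single (Xi i) (d f * g)"
| "bprod d f (W i) g (Xi j) = - xcross i j (f * g)"
| "bprod d f X g One = single X (f * g)"
| "bprod d f X g (W i) = single (Xi i) (d g * f)"
| "bprod d f X g X = single One (d f * g - f * d g)"
| "bprod d f X g (Xi j) = single (W j) (- (f * g))"
| "bprod d f (Xi i) g One = single (Xi i) (f * g)"
| "bprod d f (Xi i) g (W j) = - xcross j i (f * g)"
| "bprod d f (Xi i) g X = single (W i) (f * g)"
| "bprod d f (Xi i) g (Xi j) = 0"

definition jmult :: "('z::comm_ring_1 \<Rightarrow> 'z) \<Rightarrow> 'z jck \<Rightarrow> 'z jck \<Rightarrow> 'z jck" where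
  "jmult d a b = (\<Sum>e\<in>cbs. \<Sum>e'\<in>cbs. bprod d (a e) e (b e') e')"

definition sJ :: "('f \<Rightarrow> 'z \<Rightarrow> 'z) \<Rightarrow> 'f \<Rightarrow> 'z jck \<Rightarrow> 'z jck" where
  "sJ sc c v = (\<lambda>k. sc c (v k))"

definition sE :: "('f \<Rightarrow> 'z \<Rightarrow> 'z) \<Rightarrow> 'f \<Rightarrow> ('z jck \<Rightarrow> 'z jck) \<Rightarrow> ('z jck \<Rightarrow> 'z jck)" where
  "sE sc c D = (\<lambda>v. sJ sc c (D v))"

text \<open>Z_2-grading: parity of generators; Jpar False = J_0, Jpar True = J_1.\<close>
fun isodd :: "cb \<Rightarrow> bool" where
  "isodd One = False" | "isodd (W i) = False" | "isodd X = True" | "isodd (Xi i) = True"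

definition Jpar :: "bool \<Rightarrow> ('z::zero) jck set" where
  "Jpar q = {v. \<forall>k. isodd k \<noteq> q \<longrightarrow> v k = 0}"

text \<open>Z_2^2-grading; False/True encode 0/1 in Z_2.\<close>
fun gr :: "cb \<Rightarrow> bool \<times> bool" where
  "gr One = (False, False)" | "gr X = (False, False)"
| "gr (W I1) = (True, False)" | "gr (Xi I1) = (True, False)"
| "gr (W I2) = (False, True)" | "gr (Xi I2) = (False, True)"
| "gr (W I3) = (True, True)" | "gr (Xi I3) = (True, True)"

definition Jgr :: "bool \<times> bool \<Rightarrow> ('z::zero) jck set" where
  "Jgr \<beta> = {v. \<forall>k. gr k \<noteq> \<beta> \<longrightarrow> v k = 0}"

definition Kset :: "('z::zero) jck set" where
  "Kset = {v. \<forall>k. k \<notin> {One, X} \<longrightarrow> v k = 0}"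

text \<open>Homogeneous super derivation of parity p (False = even, True = odd) of
  the subalgebra with carrier A (A = UNIV for J, A = Kset for K).  As a map
  J -> J it is taken to be 0 outside A.\<close>
definition is_sder :: "('f \<Rightarrow> 'z \<Rightarrow> 'z) \<Rightarrow> ('z::comm_ring_1 \<Rightarrow> 'z) \<Rightarrow> 'z jck set \<Rightarrow> bool
    \<Rightarrow> ('z jck \<Rightarrow> 'z jck) \<Rightarrow> bool" where
  "is_sder sc d A p D \<longleftrightarrow>
     (\<forall>v. v \<notin> A \<longrightarrow> D v = 0) \<and>
     (\<forall>v\<in>A. D v \<in> A) \<and>
     (\<forall>u\<in>A. \<forall>v\<in>A. D (u + v) = D u + D v) \<and>
     (\<forall>c. \<forall>v\<in>A. D (sJ sc c v) = sJ sc c (D v)) \<and>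
     (\<forall>q. \<forall>v\<in>A. v \<in> Jpar q \<longrightarrow> D v \<in> Jpar (q \<noteq> p)) \<and>
     (\<forall>q. \<forall>a\<in>A. \<forall>b\<in>A. a \<in> Jpar q \<longrightarrow>
        D (jmult d a b) = jmult d (D a) b +
          (if p \<and> q then - jmult d a (D b) else jmult d a (D b)))"

definition Der :: "('f \<Rightarrow> 'z \<Rightarrow> 'z) \<Rightarrow> ('z::comm_ring_1 \<Rightarrow> 'z) \<Rightarrow> 'z jck set
    \<Rightarrow> ('z jck \<Rightarrow> 'z jck) set" where
  "Der sc d A = {D0 + D1 | D0 D1. is_sder sc d A False D0 \<and> is_sder sc d A True D1}"

definition Dop :: "('z::comm_ring_1 \<Rightarrow> 'z) \<Rightarrow> bool \<Rightarrow> 'z jck \<Rightarrow> bool \<Rightarrow> 'z jck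
    \<Rightarrow> ('z jck \<Rightarrow> 'z jck)" where
  "Dop d qa a qb b = (\<lambda>c. jmult d a (jmult d b c) -
      (if qa \<and> qb then - jmult d b (jmult d a c) else jmult d b (jmult d a c)))"

definition Inder :: "('f::field \<Rightarrow> 'z \<Rightarrow> 'z) \<Rightarrow> ('z::comm_ring_1 \<Rightarrow> 'z)
    \<Rightarrow> ('z jck \<Rightarrow> 'z jck) set" where
  "Inder sc d = module.span (sE sc)
     {Dop d qa a qb b | qa a qb b. a \<in> Jpar qa \<and> b \<in> Jpar qb}"

definition odd_map :: "('z::zero jck \<Rightarrow> 'z jck) \<Rightarrow> bool" where
  "odd_map D \<longleftrightarrow> (\<forall>q v. v \<in> Jpar q \<longrightarrow> D v \<in> Jpar (\<not> q))"

definition Der00 :: "('f \<Rightarrow> 'z \<Rightarrow> 'z) \<Rightarrow> ('z::comm_ring_1 \<Rightarrow> 'z) \<Rightarrow> ('z jck \<Rightarrow> 'z jck) set" where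
  "Der00 sc d = {D \<in> Der sc d UNIV. \<forall>\<beta> v. v \<in> Jgr \<beta> \<longrightarrow> D v \<in> Jgr \<beta>}"

definition res :: "('z::zero jck \<Rightarrow> 'z jck) \<Rightarrow> ('z jck \<Rightarrow> 'z jck)" where
  "res D = (\<lambda>v. if v \<in> Kset then D v else 0)"

definition zel :: "'z::zero \<Rightarrow> 'z jck" where "zel f = single One f"
definition xel :: "'z::{zero,one} jck" where "xel = single X 1"

definition is_eta :: "('f \<Rightarrow> 'z \<Rightarrow> 'z) \<Rightarrow> ('z::comm_ring_1 \<Rightarrow> 'z) \<Rightarrow> 'z
    \<Rightarrow> ('z jck \<Rightarrow> 'z jck) \<Rightarrow> bool" where
  "is_eta sc d a e \<longleftrightarrow> is_sder sc d Kset True e \<and> (\<forall>f. e (zel f) = 0) \<and> e xel = zel a"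

definition Derbar :: "('f \<Rightarrow> 'z \<Rightarrow> 'z) \<Rightarrow> ('z::comm_ring_1 \<Rightarrow> 'z) \<Rightarrow> ('z jck \<Rightarrow> 'z jck) set" where
  "Derbar sc d = {d0 + e | d0 e. is_sder sc d Kset False d0 \<and> (\<exists>a. is_eta sc d a e)}"

definition is_basis_of :: "('f::field \<Rightarrow> 'b::ab_group_add \<Rightarrow> 'b) \<Rightarrow> 'b set \<Rightarrow> 'b set \<Rightarrow> bool" where
  "is_basis_of s V B \<longleftrightarrow> B \<subseteq> V \<and> \<not> module.dependent s B \<and> module.span s B = V"

end

theory Submission
  imports Defs
begin


definition mk :: "'z \<Rightarrow> 'z \<Rightarrow> 'z \<Rightarrow> 'z \<Rightarrow> 'z \<Rightarrow> 'z \<Rightarrow> 'z \<Rightarrow> 'z \<Rightarrow> 'z jck" where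
  "mk a0 a1 a2 a3 ax y1 y2 y3 = (\<lambda>k. case k of One \<Rightarrow> a0 | W i \<Rightarrow> (case i of I1 \<Rightarrow> a1 | I2 \<Rightarrow> a2 | I3 \<Rightarrow> a3)
     | X \<Rightarrow> ax | Xi i \<Rightarrow> (case i of I1 \<Rightarrow> y1 | I2 \<Rightarrow> y2 | I3 \<Rightarrow> y3))"

lemma mk_apply[simp]:
  "mk a0 a1 a2 a3 ax y1 y2 y3 One = a0"
  "mk a0 a1 a2 a3 ax y1 y2 y3 (W I1) = a1"
  "mk a0 a1 a2 a3 ax y1 y2 y3 (W I2) = a2"
  "mk a0 a1 a2 a3 ax y1 y2 y3 (W I3) = a3"
  "mk a0 a1 a2 a3 ax y1 y2 y3 X = ax"
  "mk a0 a1 a2 a3 ax y1 y2 y3 (Xi I1) = y1"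
  "mk a0 a1 a2 a3 ax y1 y2 y3 (Xi I2) = y2"
  "mk a0 a1 a2 a3 ax y1 y2 y3 (Xi I3) = y3"
  by (simp_all add: mk_def)

lemma mk_eta: "v = mk (v One) (v (W I1)) (v (W I2)) (v (W I3)) (v X) (v (Xi I1)) (v (Xi I2)) (v (Xi I3))"
proof (rule ext)
  fix k show "v k = mk (v One) (v (W I1)) (v (W I2)) (v (W I3)) (v X) (v (Xi I1)) (v (Xi I2)) (v (Xi I3)) k"
    by (cases k) (simp_all add: mk_def split: idx.split)
qed

lemma fun_eq_cb: "u = v \<longleftrightarrow> u One = v One \<and> u (W I1) = v (W I1) \<and> u (W I2) = v (W I2) \<and> u (W I3) = v (W I3)
   \<and> u X = v X \<and> u (Xi I1) = v (Xi I1) \<and> u (Xi I2) = v (Xi I2) \<and> u (Xi I3) = v (Xi I3)"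
  by (metis mk_eta)

lemma mk_eq_iff: "mk a0 a1 a2 a3 ax y1 y2 y3 = mk b0 b1 b2 b3 bx z1 z2 z3 \<longleftrightarrow>
  a0 = b0 \<and> a1 = b1 \<and> a2 = b2 \<and> a3 = b3 \<and> ax = bx \<and> y1 = z1 \<and> y2 = z2 \<and> y3 = z3"
  by (metis mk_apply)

lemma ext_cb: "(\<And>k. u k = v k) \<Longrightarrow> u = v" by auto

definition JM :: "('z::comm_ring_1 \<Rightarrow> 'z) \<Rightarrow> 'z jck \<Rightarrow> 'z jck \<Rightarrow> 'z jck" where
 "JM d u v = mk
   (u One * v One + u (W I1) * v (W I1) + u (W I2) * v (W I2) - u (W I3) * v (W I3) + (d (u X) * v X - u X * d (v X)))
   (u One * v (W I1) + u (W I1) * v One - u X * v (Xi I1) + u (Xi I1) * v X)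
   (u One * v (W I2) + u (W I2) * v One - u X * v (Xi I2) + u (Xi I2) * v X)
   (u One * v (W I3) + u (W I3) * v One - u X * v (Xi I3) + u (Xi I3) * v X)
   (u One * v X + u X * v One)
   (u One * v (Xi I1) + u (Xi I1) * v One + d (u (W I1)) * v X + u X * d (v (W I1))
      - u (W I3) * v (Xi I2) + u (W I2) * v (Xi I3) - u (Xi I2) * v (W I3) + u (Xi I3) * v (W I2))
   (u One * v (Xi I2) + u (Xi I2) * v One + d (u (W I2)) * v X + u X * d (v (W I2))
      - u (W I1) * v (Xi I3) + u (W I3) * v (Xi I1) - u (Xi I3) * v (W I1) + u (Xi I1) * v (W I3))
   (u One * v (Xi I3) + u (Xi I3) * v One + d (u (W I3)) * v X + u X * d (v (W I3))
      - u (W I1) * v (Xi I2) + u (W I2) * v (Xi I1) - u (Xi I2) * v (W I1) + u (Xi I1) * v (W I2))"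

lemma cbs_sum: "(\<Sum>e\<in>cbs. f e) = f One + f (W I1) + f (W I2) + f (W I3) + f X + f (Xi I1) + f (Xi I2) + f (Xi I3)"
  by (simp add: cbs_def add.assoc)

lemma jmult_JM: "jmult d u v = JM d u v"
  unfolding fun_eq_cb
  by (simp add: jmult_def cbs_sum JM_def single_def algebra_simps)




lemma cb_all: "(\<forall>e. P e) \<longleftrightarrow> P One \<and> P (W I1) \<and> P (W I2) \<and> P (W I3) \<and> P X \<and> P (Xi I1) \<and> P (Xi I2) \<and> P (Xi I3)"
proof
  assume h: "P One \<and> P (W I1) \<and> P (W I2) \<and> P (W I3) \<and> P X \<and> P (Xi I1) \<and> P (Xi I2) \<and> P (Xi I3)"
  show "\<forall>e. P e"
  proof
    fix e show "P e"
    proof (cases e)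
      case (W i) then show ?thesis using h by (cases i) auto
    next
      case (Xi i) then show ?thesis using h by (cases i) auto
    qed (use h in auto)
  qed
qed auto



lemma Jpar_False: "a \<in> Jpar False \<longleftrightarrow> a X = 0 \<and> a (Xi I1) = 0 \<and> a (Xi I2) = 0 \<and> a (Xi I3) = 0"
  unfolding Jpar_def by (simp add: cb_all)
lemma Jpar_True: "a \<in> Jpar True \<longleftrightarrow> a One = 0 \<and> a (W I1) = 0 \<and> a (W I2) = 0 \<and> a (W I3) = 0"
  unfolding Jpar_def by (simp add: cb_all)

definition Dab :: "('z::comm_ring_1 \<Rightarrow> 'z) \<Rightarrow> 'z \<Rightarrow> 'z \<Rightarrow> 'z \<Rightarrow> 'z \<Rightarrow> 'z jck \<Rightarrow> 'z jck" where
 "Dab d a1 a2 a3 b v = mk (- b * v X + a1 * v (Xi I1) + a2 * v (Xi I2) + a3 * v (Xi I3))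
   (a1 * d (v X) - d a1 * v X - a3 * v (Xi I2) - a2 * v (Xi I3))
   (a2 * d (v X) - d a2 * v X + a3 * v (Xi I1) + a1 * v (Xi I3))
   (- a3 * d (v X) + d a3 * v X - a2 * v (Xi I1) + a1 * v (Xi I2))
   (a1 * v (W I1) + a2 * v (W I2) + a3 * v (W I3))
   (a1 * d (v One) + b * v (W I1) - a2 * d (v (W I3)) - a3 * d (v (W I2)))
   (a2 * d (v One) + b * v (W I2) + a3 * d (v (W I1)) + a1 * d (v (W I3)))
   (- a3 * d (v One) + b * v (W I3) - a2 * d (v (W I1)) + a1 * d (v (W I2)))"

locale jck =
  fixes sc :: "'f::field \<Rightarrow> 'z::comm_ring_1 \<Rightarrow> 'z" and \<delta> :: "'z \<Rightarrow> 'z"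
  assumes two: "(2::'f) \<noteq> 0"
    and vs: "vector_space sc"
    and scm: "\<forall>c u v. sc c (u * v) = sc c u * v"
    and dadd: "\<forall>u v. \<delta> (u + v) = \<delta> u + \<delta> v"
    and dsc: "\<forall>c u. \<delta> (sc c u) = sc c (\<delta> u)"
    and dmul: "\<forall>u v. \<delta> (u * v) = \<delta> u * v + u * \<delta> v"
    and spn: "module.span sc {f * \<delta> g | f g. True} = UNIV"
begin

sublocale Z: vector_space sc by (rule vs)

lemma d_add[simp]: "\<delta> (u + v) = \<delta> u + \<delta> v" using dadd by blast
lemma d_mult[simp]: "\<delta> (u * v) = \<delta> u * v + u * \<delta> v" using dmul by blast
lemma d_0[simp]: "\<delta> 0 = 0" using d_add[of 0 0] by simp
lemma d_minus[simp]: "\<delta> (- u) = - \<delta> u"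
proof -
  have "\<delta> u + \<delta> (- u) = 0" using d_add[of u "-u"] by simp
  then show ?thesis by (simp add: minus_unique)
qed
lemma d_diff[simp]: "\<delta> (u - v) = \<delta> u - \<delta> v" using d_add[of u "-v"] by simp
lemma d_1[simp]: "\<delta> 1 = 0" using d_mult[of 1 1] by simp
lemma d_sc[simp]: "\<delta> (sc c u) = sc c (\<delta> u)" using dsc by blast
lemma sc_mult1[simp]: "sc c (u * v) = sc c u * v" using scm by blast
lemma sc_mult2: "sc c (u * v) = u * sc c v" using scm by (metis mult.commute)

lemma Dab_leib: "a \<in> Jpar q \<Longrightarrow> Dab \<delta> a1 a2 a3 b (jmult \<delta> a c) = jmult \<delta> (Dab \<delta> a1 a2 a3 b a) c +
   (if True \<and> q then - jmult \<delta> a (Dab \<delta> a1 a2 a3 b c) else jmult \<delta> a (Dab \<delta> a1 a2 a3 b c))"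
  apply (cases q)
   apply (simp_all add: Jpar_True Jpar_False jmult_JM JM_def Dab_def fun_eq_cb)
   apply (simp_all add: algebra_simps)
  done

lemma d_sc1[simp]: "\<delta> (sc c 1) = 0" by simp
lemma scl: "NO_MATCH 1 u \<Longrightarrow> sc c u = sc c 1 * u"
  using sc_mult1[of c 1 u] by simp

lemma sJ_apply[simp]: "sJ sc c v k = sc c (v k)" by (simp add: sJ_def)

lemma jmult_add1: "jmult \<delta> (u + u') v = jmult \<delta> u v + jmult \<delta> u' v"
  by (simp add: jmult_JM JM_def fun_eq_cb algebra_simps)
lemma jmult_add2: "jmult \<delta> u (v + v') = jmult \<delta> u v + jmult \<delta> u v'"
  by (simp add: jmult_JM JM_def fun_eq_cb algebra_simps)
lemma jmult_minus1: "jmult \<delta> (- u) v = - jmult \<delta> u v"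
  by (simp add: jmult_JM JM_def fun_eq_cb algebra_simps)
lemma jmult_minus2: "jmult \<delta> u (- v) = - jmult \<delta> u v"
  by (simp add: jmult_JM JM_def fun_eq_cb algebra_simps)
lemma jmult_zero1[simp]: "jmult \<delta> 0 v = 0"
  by (simp add: jmult_JM JM_def fun_eq_cb)
lemma jmult_zero2[simp]: "jmult \<delta> u 0 = 0"
  by (simp add: jmult_JM JM_def fun_eq_cb)
lemma jmult_sJ1: "jmult \<delta> (sJ sc c u) v = sJ sc c (jmult \<delta> u v)"
  apply (simp add: jmult_JM JM_def fun_eq_cb del: sc_mult1)
  apply (simp add: scl algebra_simps del: sc_mult1)
  done
lemma jmult_sJ2: "jmult \<delta> u (sJ sc c v) = sJ sc c (jmult \<delta> u v)"
  apply (simp add: jmult_JM JM_def fun_eq_cb del: sc_mult1)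
  apply (simp add: scl algebra_simps del: sc_mult1)
  done

lemma Dab_add: "Dab \<delta> a1 a2 a3 b (u + v) = Dab \<delta> a1 a2 a3 b u + Dab \<delta> a1 a2 a3 b v"
  by (simp add: Dab_def fun_eq_cb algebra_simps)
lemma Dab_sJ: "Dab \<delta> a1 a2 a3 b (sJ sc c v) = sJ sc c (Dab \<delta> a1 a2 a3 b v)"
  apply (simp add: Dab_def fun_eq_cb del: sc_mult1)
  apply (simp add: scl algebra_simps del: sc_mult1)
  done

lemma Dab_par: "v \<in> Jpar q \<Longrightarrow> Dab \<delta> a1 a2 a3 b v \<in> Jpar (\<not> q)"
  by (cases q) (simp_all add: Jpar_True Jpar_False Dab_def)

lemma Dab_sder: "is_sder sc \<delta> UNIV True (Dab \<delta> a1 a2 a3 b)"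
  unfolding is_sder_def by (simp add: Dab_add Dab_sJ Dab_par Dab_leib)

lemma Dop_Dab: "u \<in> Jpar False \<Longrightarrow> v \<in> Jpar True \<Longrightarrow>
  Dop \<delta> False u True v = Dab \<delta> (Dop \<delta> False u True v (single (W I1) 1) X) (Dop \<delta> False u True v (single (W I2) 1) X)
     (Dop \<delta> False u True v (single (W I3) 1) X) (Dop \<delta> False u True v (single (W I1) 1) (Xi I1))"
  apply (rule ext)
  apply (simp add: Jpar_True Jpar_False Dop_def jmult_JM JM_def Dab_def single_def fun_eq_cb)
  apply (simp add: algebra_simps)
  done

lemma sder_add: "is_sder sc \<delta> UNIV p D \<Longrightarrow> D (u + v) = D u + D v"
  unfolding is_sder_def by blast
lemma sder_sJ: "is_sder sc \<delta> UNIV p D \<Longrightarrow> D (sJ sc c v) = sJ sc c (D v)"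
  unfolding is_sder_def by blast
lemma sder_par: "is_sder sc \<delta> UNIV p D \<Longrightarrow> v \<in> Jpar q \<Longrightarrow> D v \<in> Jpar (q \<noteq> p)"
  unfolding is_sder_def by blast
lemma sder_leib: "is_sder sc \<delta> UNIV p D \<Longrightarrow> a \<in> Jpar q \<Longrightarrow>
   D (jmult \<delta> a c) = jmult \<delta> (D a) c + (if p \<and> q then - jmult \<delta> a (D c) else jmult \<delta> a (D c))"
  unfolding is_sder_def by blast
lemma sder_leibF: "is_sder sc \<delta> UNIV p D \<Longrightarrow> a \<in> Jpar False \<Longrightarrow>
   D (jmult \<delta> a c) = jmult \<delta> (D a) c + jmult \<delta> a (D c)"
  using sder_leib[of p D a False c] by simp
lemma sder_0: "is_sder sc \<delta> UNIV p D \<Longrightarrow> D 0 = 0"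
  using sder_add[of p D 0 0] by simp
lemma sder_neg: "is_sder sc \<delta> UNIV p D \<Longrightarrow> D (- v) = - D v"
  using sder_add[of p D v "-v"] sder_0[of p D] by (simp add: minus_unique)

lemma single_zero[simp]: "single e 0 = 0" by (simp add: single_def fun_eq_iff)

definition wg :: "idx \<Rightarrow> 'a::{zero,one} jck" where "wg i = single (W i) 1"
definition yg :: "idx \<Rightarrow> 'a::{zero,one} jck" where "yg i = single (Xi i) 1"

lemmas gsimps = wg_def yg_def xel_def zel_def single_def

lemma gen_par[simp]: "wg i \<in> Jpar False" "yg i \<in> Jpar True" "xel \<in> Jpar True" "zel f \<in> Jpar False"
  "single (W i) f \<in> Jpar False" "single (Xi i) f \<in> Jpar True" "single X f \<in> Jpar True"
  by (cases i; simp add: Jpar_True Jpar_False gsimps)+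

lemma decomp: "v = zel (v One) + jmult \<delta> (zel (v (W I1))) (wg I1) + jmult \<delta> (zel (v (W I2))) (wg I2)
  + jmult \<delta> (zel (v (W I3))) (wg I3) + jmult \<delta> (zel (v X)) xel + jmult \<delta> (zel (v (Xi I1))) (yg I1)
  + jmult \<delta> (zel (v (Xi I2))) (yg I2) + jmult \<delta> (zel (v (Xi I3))) (yg I3)"
  by (simp add: jmult_JM JM_def gsimps fun_eq_cb)

lemma span_kill: assumes "\<And>f g. y * (f * \<delta> g) = 0" shows "y = 0"
proof -
  have "(1::'z) \<in> Z.span {f * \<delta> g | f g. True}" using spn by simp
  then have "y * 1 = 0"
  proof (induction rule: Z.span_induct_alt)
    case base then show ?case by simp
  next
    case (step c x z)
    then obtain f g where "x = f * \<delta> g" by blast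
    then have "y * x = 0" using assms by simp
    then have "y * sc c x = 0" by (metis sc_mult2 Z.scale_zero_right)
    then show ?case using step by (simp add: distrib_left)
  qed
  then show ?thesis by simp
qed

lemma gen_zero:
  assumes D: "is_sder sc \<delta> UNIV p D"
    and z: "\<And>f. D (zel f) = 0" and w: "\<And>i. D (wg i) = 0" and x: "D xel = 0" and y: "\<And>i. D (yg i) = 0"
  shows "D = 0"
proof (rule ext)
  fix v
  have t: "D (jmult \<delta> (zel f) g) = 0" if "D g = 0" for f g
    using sder_leibF[OF D, of "zel f" g] z that by simp
  show "D v = 0 v"
    apply (subst decomp[of v])
    apply (simp only: sder_add[OF D] z t w x y)
    apply simp
    done
qed

lemmas jcomp = jmult_JM JM_def gsimps fun_eq_cb

lemma odd_unique:
  assumes D: "is_sder sc \<delta> UNIV True D" and w: "\<And>i. D (wg i) = 0"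
  shows "D = 0"
proof -
  note L = sder_leibF[OF D] and D0 = sder_0[OF D] and Dn = sder_neg[OF D]
  have Dx: "D xel = 0"
  proof -
    have h: "jmult \<delta> (wg i) (D xel) = 0" for i
    proof -
      have "jmult \<delta> (wg i) xel = 0" by (cases i) (simp_all add: jcomp)
      then show ?thesis using L[of "wg i" xel] w D0 by simp
    qed
    have p: "D xel \<in> Jpar False" using sder_par[OF D, of xel True] by simp
    show ?thesis using h[of I1] h[of I2] h[of I3] p by (simp add: jcomp Jpar_False)
  qed
  have h: "D (jmult \<delta> (wg i) (yg j)) = jmult \<delta> (wg i) (D (yg j))" for i j
    using L[of "wg i" "yg j"] w by simp
  have pr: "jmult \<delta> (wg I2) (yg I3) = yg I1" "jmult \<delta> (wg I3) (yg I2) = - yg I1"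
    "jmult \<delta> (wg I3) (yg I1) = yg I2" "jmult \<delta> (wg I1) (yg I3) = - yg I2"
    "jmult \<delta> (wg I2) (yg I1) = yg I3" "jmult \<delta> (wg I1) (yg I2) = - yg I3"
    "jmult \<delta> (wg i) (yg i) = 0"
    by (cases i; simp add: jcomp)+
  have py: "D (yg i) \<in> Jpar False" for i using sder_par[OF D, of "yg i" True] by simp
  have Dy: "D (yg I1) = 0 \<and> D (yg I2) = 0 \<and> D (yg I3) = 0"
    using h[of I2 I3] h[of I3 I2] h[of I3 I1] h[of I1 I3] h[of I2 I1] h[of I1 I2]
      h[of I1 I1] h[of I2 I2] h[of I3 I3] py[of I1] py[of I2] py[of I3]
    unfolding pr Dn D0 by (simp add: jcomp Jpar_False)
  have Dy': "D (yg i) = 0" for i using Dy by (cases i) auto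
  define \<alpha> where "\<alpha> f = D (zel f) X" for f
  have pz: "D (zel f) \<in> Jpar True" for f using sder_par[OF D, of "zel f" False] by simp
  have s1: "D (single (W i) f) = jmult \<delta> (D (zel f)) (wg i)" for i f
  proof -
    have "jmult \<delta> (zel f) (wg i) = single (W i) f" by (cases i; simp add: jcomp)
    then show ?thesis using L[of "zel f" "wg i"] w by simp
  qed
  have s2: "D (single (Xi i) (\<delta> f)) = jmult \<delta> (D (single (W i) f)) xel" for i f
  proof -
    have "jmult \<delta> (single (W i) f) xel = single (Xi i) (\<delta> f)" by (cases i; simp add: jcomp)
    then show ?thesis using L[of "single (W i) f" xel] Dx by simp
  qed
  have s3: "D (single (Xi i) h) = jmult \<delta> (D (zel h)) (yg i)" for i h
  proof -
    have "jmult \<delta> (zel h) (yg i) = single (Xi i) h" by (cases i; simp add: jcomp)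
    then show ?thesis using L[of "zel h" "yg i"] Dy' by simp
  qed
  have e: "jmult \<delta> (D (zel (\<delta> f))) (yg i) = jmult \<delta> (jmult \<delta> (D (zel f)) (wg i)) xel" for i f
    using s1 s2 s3 by metis
  have A: "D (zel f) = single X (\<alpha> f)" for f
    using e[of f I1] e[of f I2] e[of f I3] pz[of f] pz[of "\<delta> f"]
    by (simp add: jcomp Jpar_True \<alpha>_def)
  have sx: "D (single X g) = jmult \<delta> (D (zel g)) xel" for g
  proof -
    have "jmult \<delta> (zel g) xel = single X g" by (simp add: jcomp)
    then show ?thesis using L[of "zel g" xel] Dx by simp
  qed
  have s4: "D (jmult \<delta> (single (W I1) f) (single X g)) = jmult \<delta> (D (single (W I1) f)) (single X g)
      + jmult \<delta> (single (W I1) f) (D (single X g))" for f g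
    using L[of "single (W I1) f" "single X g"] by simp
  have e4: "- \<alpha> (\<delta> f * g) = f * \<delta> (\<alpha> g)" for f g
  proof -
    have "jmult \<delta> (single (W I1) f) (single X g) = single (Xi I1) (\<delta> f * g)" by (simp add: jcomp)
    then have "jmult \<delta> (D (zel (\<delta> f * g))) (yg I1) = jmult \<delta> (jmult \<delta> (D (zel f)) (wg I1)) (single X g)
      + jmult \<delta> (single (W I1) f) (jmult \<delta> (D (zel g)) xel)"
      using s4[of f g] s3 s1 sx by metis
    then show ?thesis unfolding A by (simp add: jcomp)
  qed
  have a0: "\<alpha> 0 = 0" unfolding \<alpha>_def using D0 by (simp add: zel_def)
  have da: "\<delta> (\<alpha> g) = 0" for g using e4[of 1 g] a0 by simp
  have e5: "\<alpha> (f * g) = \<alpha> f * g + f * \<alpha> g" for f g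
  proof -
    have "jmult \<delta> (zel f) (zel g) = zel (f * g)" by (simp add: jcomp)
    then have "D (zel (f * g)) = jmult \<delta> (D (zel f)) (zel g) + jmult \<delta> (zel f) (D (zel g))"
      using L[of "zel f" "zel g"] by simp
    then show ?thesis unfolding A by (simp add: jcomp algebra_simps)
  qed
  have a1: "\<alpha> (\<delta> f) = 0" for f using e4[of f 1] da by simp
  have dd: "\<delta> f * \<alpha> g = 0" for f g using e4[of f g] e5[of "\<delta> f" g] a1 da by simp
  have az: "\<alpha> g = 0" for g
  proof (rule span_kill)
    fix f h
    have "\<alpha> g * (f * \<delta> h) = f * (\<delta> h * \<alpha> g)" by (simp add: ac_simps)
    then show "\<alpha> g * (f * \<delta> h) = 0" using dd[of h g] by simp
  qed
  show ?thesis
    by (rule gen_zero[OF D]) (auto simp: A az w Dx Dy')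
qed

lemma Jpar_add: "(u::'z jck) \<in> Jpar q \<Longrightarrow> v \<in> Jpar q \<Longrightarrow> u + v \<in> Jpar q" by (simp add: Jpar_def)
lemma Jpar_neg: "(u::'z jck) \<in> Jpar q \<Longrightarrow> - u \<in> Jpar q" by (simp add: Jpar_def)
lemma Jpar_diff: "(u::'z jck) \<in> Jpar q \<Longrightarrow> v \<in> Jpar q \<Longrightarrow> u - v \<in> Jpar q" by (simp add: Jpar_def)
lemma Jpar_sJ: "u \<in> Jpar q \<Longrightarrow> sJ sc c u \<in> Jpar q" by (simp add: Jpar_def)
lemma Jpar_0[simp]: "0 \<in> Jpar q" by (simp add: Jpar_def)

lemma sJ_add: "sJ sc c (u + v) = sJ sc c u + sJ sc c v" by (simp add: fun_eq_iff Z.scale_right_distrib)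
lemma sJ_neg: "sJ sc c (- u) = - sJ sc c u" by (simp add: fun_eq_iff)
lemma sJ_comm: "sJ sc c (sJ sc c' u) = sJ sc c' (sJ sc c u)" by (simp add: fun_eq_iff mult.commute)

lemma jmult_diff1: "jmult \<delta> (u - u') v = jmult \<delta> u v - jmult \<delta> u' v"
  by (simp add: jmult_JM JM_def fun_eq_cb algebra_simps)
lemma jmult_diff2: "jmult \<delta> u (v - v') = jmult \<delta> u v - jmult \<delta> u v'"
  by (simp add: jmult_JM JM_def fun_eq_cb algebra_simps)

lemma sder_plus: assumes "is_sder sc \<delta> UNIV p D" "is_sder sc \<delta> UNIV p D'"
  shows "is_sder sc \<delta> UNIV p (D + D')"
  using assms unfolding is_sder_def
  by (auto simp: jmult_add1 jmult_add2 sJ_add Jpar_add algebra_simps)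

lemma sder_diff: assumes "is_sder sc \<delta> UNIV p D" "is_sder sc \<delta> UNIV p D'"
  shows "is_sder sc \<delta> UNIV p (D - D')"
  using assms unfolding is_sder_def
  by (auto simp: jmult_diff1 jmult_diff2 sJ_add sJ_neg Jpar_diff algebra_simps)

lemma sder_uminus: assumes "is_sder sc \<delta> UNIV p D"
  shows "is_sder sc \<delta> UNIV p (- D)"
  using assms unfolding is_sder_def
  by (auto simp: jmult_minus1 jmult_minus2 sJ_neg Jpar_neg algebra_simps)

lemma sder_sE: assumes "is_sder sc \<delta> UNIV p D"
  shows "is_sder sc \<delta> UNIV p (sE sc c D)"
  using assms unfolding is_sder_def sE_def
  by (auto simp: jmult_sJ1 jmult_sJ2 sJ_add sJ_neg Jpar_sJ sJ_comm simp del: sJ_apply)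

lemma sder_zero: "is_sder sc \<delta> UNIV p 0"
  unfolding is_sder_def by (simp add: fun_eq_iff)

lemma odd_struct:
  assumes D: "is_sder sc \<delta> UNIV True D"
  shows "D = Dab \<delta> (D (wg I1) X) (D (wg I2) X) (D (wg I3) X) (D (wg I1) (Xi I1))"
proof -
  note L = sder_leibF[OF D] and D0 = sder_0[OF D]
  have h: "0 = jmult \<delta> (D (wg i)) (wg j) + jmult \<delta> (wg i) (D (wg j))" if "i \<noteq> j" for i j
  proof -
    have "jmult \<delta> (wg i) (wg j) = 0" using that by (cases i; cases j; simp add: jcomp)
    then show ?thesis using L[of "wg i" "wg j"] D0 by simp
  qed
  have p: "D (wg i) \<in> Jpar True" for i using sder_par[OF D, of "wg i" False] by simp
  let ?E = "Dab \<delta> (D (wg I1) X) (D (wg I2) X) (D (wg I3) X) (D (wg I1) (Xi I1))"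
  have E: "is_sder sc \<delta> UNIV True ?E" by (rule Dab_sder)
  have "D (wg I1) = ?E (wg I1) \<and> D (wg I2) = ?E (wg I2) \<and> D (wg I3) = ?E (wg I3)"
    using h[of I1 I2] h[of I1 I3] h[of I2 I3] p[of I1] p[of I2] p[of I3]
    by (simp add: jcomp Jpar_True Dab_def)
  then have "(D - ?E) (wg i) = 0" for i by (cases i) auto
  then have "D - ?E = 0" by (rule odd_unique[OF sder_diff[OF D E]])
  then show ?thesis by simp
qed

lemma vs_sJ: "vector_space (sJ sc)"
  by unfold_locales (simp_all add: fun_eq_iff Z.scale_right_distrib Z.scale_left_distrib)
lemma vs_sE: "vector_space (sE sc)"
  by unfold_locales (simp_all add: fun_eq_iff sE_def Z.scale_right_distrib Z.scale_left_distrib)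

sublocale J: vector_space "sJ sc" by (rule vs_sJ)
sublocale E: vector_space "sE sc" by (rule vs_sE)

definition par0 :: "'z jck \<Rightarrow> 'z jck" where "par0 v = mk (v One) (v (W I1)) (v (W I2)) (v (W I3)) 0 0 0 0"
definition par1 :: "'z jck \<Rightarrow> 'z jck" where "par1 v = mk 0 0 0 0 (v X) (v (Xi I1)) (v (Xi I2)) (v (Xi I3))"
definition oddpart :: "('z jck \<Rightarrow> 'z jck) \<Rightarrow> ('z jck \<Rightarrow> 'z jck)" where
  "oddpart D = (\<lambda>v. par1 (D (par0 v)) + par0 (D (par1 v)))"

lemma par_in[simp]: "par0 v \<in> Jpar False" "par1 v \<in> Jpar True"
  by (simp_all add: par0_def par1_def Jpar_True Jpar_False)
lemma par_split: "v = par0 v + par1 v" by (simp add: par0_def par1_def fun_eq_cb)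
lemma par_id: "w \<in> Jpar True \<Longrightarrow> par1 w = w" "w \<in> Jpar False \<Longrightarrow> par0 w = w"
  "w \<in> Jpar True \<Longrightarrow> par0 w = 0" "w \<in> Jpar False \<Longrightarrow> par1 w = 0"
  by (simp_all add: par0_def par1_def Jpar_True Jpar_False fun_eq_cb)
lemma par_lin: "par0 (u + v) = par0 u + par0 v" "par1 (u + v) = par1 u + par1 v"
  "par0 (sJ sc c u) = sJ sc c (par0 u)" "par1 (sJ sc c u) = sJ sc c (par1 u)"
  by (simp_all add: par0_def par1_def fun_eq_cb)

lemma oddpart_lin: "oddpart (sE sc c D + D') = sE sc c (oddpart D) + oddpart D'"
  by (simp add: oddpart_def sE_def fun_eq_iff par_lin sJ_add algebra_simps)

lemma oddpart_id: assumes add: "\<And>u v. D (u + v) = D u + D v" and od: "odd_map D"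
  shows "oddpart D = D"
proof (rule ext)
  fix v
  have "D v = D (par0 v) + D (par1 v)" using add par_split by metis
  moreover have "D (par0 v) \<in> Jpar True" "D (par1 v) \<in> Jpar False"
    using od unfolding odd_map_def by (metis par_in(1), metis par_in(2))
  ultimately show "oddpart D v = D v" by (simp add: oddpart_def par_id add.commute)
qed

lemma jmult_par: "u \<in> Jpar q1 \<Longrightarrow> v \<in> Jpar q2 \<Longrightarrow> jmult \<delta> u v \<in> Jpar (q1 \<noteq> q2)"
  by (cases q1; cases q2; simp add: Jpar_True Jpar_False jmult_JM JM_def)

lemma Dop_add: "Dop \<delta> qa a qb b (u + v) = Dop \<delta> qa a qb b u + Dop \<delta> qa a qb b v"
  by (simp add: Dop_def jmult_add2 algebra_simps)

lemma Dop_swap: "Dop \<delta> True a False b = - Dop \<delta> False b True a"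
  by (simp add: Dop_def fun_eq_iff)

lemma Dop_odd_sder: assumes "a \<in> Jpar qa" "b \<in> Jpar qb" "qa \<noteq> qb"
  shows "is_sder sc \<delta> UNIV True (Dop \<delta> qa a qb b)"
proof (cases qa)
  case True
  then have "Dop \<delta> qa a qb b = - Dop \<delta> False b True a" using assms Dop_swap by simp
  moreover have "is_sder sc \<delta> UNIV True (Dop \<delta> False b True a)"
    using assms True Dop_Dab[of b a] Dab_sder by (metis (full_types))
  ultimately show ?thesis using sder_uminus by simp
next
  case False
  then show ?thesis using assms Dop_Dab[of a b] Dab_sder by (metis (full_types))
qed

lemma oddpart_Dop: assumes "a \<in> Jpar qa" "b \<in> Jpar qb"
  shows "is_sder sc \<delta> UNIV True (oddpart (Dop \<delta> qa a qb b))"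
proof (cases "qa = qb")
  case True
  have "Dop \<delta> qa a qb b v \<in> Jpar q" if "v \<in> Jpar q" for v q
  proof -
    have e: "(qa \<noteq> (qb \<noteq> q)) = q" "(qb \<noteq> (qa \<noteq> q)) = q" using True by auto
    have 1: "jmult \<delta> a (jmult \<delta> b v) \<in> Jpar q" using jmult_par[OF assms(1) jmult_par[OF assms(2) that]] e by simp
    have 2: "jmult \<delta> b (jmult \<delta> a v) \<in> Jpar q" using jmult_par[OF assms(2) jmult_par[OF assms(1) that]] e by simp
    show ?thesis unfolding Dop_def using 1 2 by (simp add: Jpar_diff Jpar_neg)
  qed
  then have "oddpart (Dop \<delta> qa a qb b) = 0"
    by (simp add: oddpart_def fun_eq_iff par_id[symmetric]) (simp add: par_id)
  then show ?thesis by (simp add: sder_zero)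
next
  case False
  have S: "is_sder sc \<delta> UNIV True (Dop \<delta> qa a qb b)" using Dop_odd_sder assms False by blast
  have "odd_map (Dop \<delta> qa a qb b)" using sder_par[OF S] unfolding odd_map_def by simp
  then have "oddpart (Dop \<delta> qa a qb b) = Dop \<delta> qa a qb b"
    by (intro oddpart_id) (rule Dop_add)
  then show ?thesis using S by simp
qed

lemma Dab_as_Dops: "Dab \<delta> a1 a2 a3 b = Dop \<delta> False (wg I1) True (single X (-a1)) + Dop \<delta> False (wg I2) True (single X (-a2))
   + Dop \<delta> False (wg I3) True (single X a3) + Dop \<delta> False (wg I1) True (single (Xi I1) (-b))"
  by (rule ext) (simp add: Dop_def jcomp Dab_def)

lemma Inder_span: "Inder sc \<delta> = E.span {Dop \<delta> qa a qb b | qa a qb b. a \<in> Jpar qa \<and> b \<in> Jpar qb}"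
  by (simp add: Inder_def)

lemma oddpart_zero: "oddpart 0 = 0" by (simp add: oddpart_def fun_eq_iff par_id)

lemma part1: "{D. is_sder sc \<delta> UNIV True D} = Inder sc \<delta> \<inter> {D. odd_map D}"
proof
  show "{D. is_sder sc \<delta> UNIV True D} \<subseteq> Inder sc \<delta> \<inter> {D. odd_map D}"
  proof
    fix D assume "D \<in> {D. is_sder sc \<delta> UNIV True D}"
    then have D: "is_sder sc \<delta> UNIV True D" by simp
    have om: "odd_map D" using sder_par[OF D] unfolding odd_map_def by simp
    let ?G = "{Dop \<delta> qa a qb b | qa a qb b. a \<in> Jpar qa \<and> b \<in> Jpar qb}"
    have g: "Dop \<delta> False (wg i) True (single e f) \<in> E.span ?G" if "single e f \<in> Jpar True" for i e f
      by (rule E.span_base) (use that gen_par(1)[of i] in blast)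
    have "D = Dab \<delta> (D (wg I1) X) (D (wg I2) X) (D (wg I3) X) (D (wg I1) (Xi I1))" by (rule odd_struct[OF D])
    also have "\<dots> \<in> E.span ?G" unfolding Dab_as_Dops
      by (intro E.span_add g) simp_all
    finally show "D \<in> Inder sc \<delta> \<inter> {D. odd_map D}" using om Inder_span by simp
  qed
next
  show "Inder sc \<delta> \<inter> {D. odd_map D} \<subseteq> {D. is_sder sc \<delta> UNIV True D}"
  proof
    fix S assume "S \<in> Inder sc \<delta> \<inter> {D. odd_map D}"
    then have S: "S \<in> E.span {Dop \<delta> qa a qb b | qa a qb b. a \<in> Jpar qa \<and> b \<in> Jpar qb}" and om: "odd_map S"
      by (auto simp: Inder_span)
    have "(\<forall>u v. S (u + v) = S u + S v) \<and> is_sder sc \<delta> UNIV True (oddpart S)"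
      using S
    proof (induction rule: E.span_induct_alt)
      case base
      have "is_sder sc \<delta> UNIV True (oddpart 0)" unfolding oddpart_zero by (rule sder_zero)
      then show ?case by (simp add: zero_fun_def)
    next
      case (step c x y)
      then obtain qa a qb b where x: "x = Dop \<delta> qa a qb b" "a \<in> Jpar qa" "b \<in> Jpar qb" by blast
      have "\<forall>u v. (sE sc c x + y) (u + v) = (sE sc c x + y) u + (sE sc c x + y) v"
      proof (intro allI)
        fix u v
        have 1: "x (u + v) = x u + x v" unfolding x(1) by (rule Dop_add)
        have 2: "y (u + v) = y u + y v" using step.IH by blast
        have "(sE sc c x + y) (u + v) = sJ sc c (x (u + v)) + y (u + v)" by (simp add: sE_def)
        also have "\<dots> = (sJ sc c (x u) + y u) + (sJ sc c (x v) + y v)" unfolding 1 2 sJ_add by (simp add: algebra_simps)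
        also have "\<dots> = (sE sc c x + y) u + (sE sc c x + y) v" by (simp add: sE_def)
        finally show "(sE sc c x + y) (u + v) = (sE sc c x + y) u + (sE sc c x + y) v" .
      qed
      moreover have "is_sder sc \<delta> UNIV True (oddpart (sE sc c x + y))"
        unfolding oddpart_lin using step.IH oddpart_Dop[OF x(2,3)] x(1)
        by (intro sder_plus sder_sE) auto
      ultimately show ?case by blast
    qed
    then have "oddpart S = S" and "is_sder sc \<delta> UNIV True (oddpart S)"
      using oddpart_id[of S] om by auto
    then show "S \<in> {D. is_sder sc \<delta> UNIV True D}" by simp
  qed
qed

lemma two_cancel: assumes "2 * (z::'z) = 0" shows "z = 0"
proof -
  have a: "sc 2 z = z + z"
  proof -
    have "sc (1 + 1) z = sc 1 z + sc 1 z" by (rule Z.scale_left_distrib)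
    then show ?thesis by (simp only: one_add_one Z.scale_one)
  qed
  have "z = sc 1 z" by (simp only: Z.scale_one)
  also have "\<dots> = sc (inverse 2 * 2) z" by (simp only: left_inverse[OF two])
  also have "\<dots> = sc (inverse 2) (sc 2 z)" by (simp only: Z.scale_scale)
  also have "\<dots> = sc (inverse 2) 0" using a assms by (simp only: mult_2)
  also have "\<dots> = 0" by (rule Z.scale_zero_right)
  finally show ?thesis .
qed

lemma Kset_iff: "v \<in> Kset \<longleftrightarrow> v (W I1) = 0 \<and> v (W I2) = 0 \<and> v (W I3) = 0 \<and> v (Xi I1) = 0 \<and> v (Xi I2) = 0 \<and> v (Xi I3) = 0"
  unfolding Kset_def by (simp add: cb_all)

lemma Jgr_iff: "v \<in> Jgr \<beta> \<longleftrightarrow> (\<forall>k. gr k \<noteq> \<beta> \<longrightarrow> v k = 0)" by (simp add: Jgr_def)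

lemma Kset_Jgr: "Kset = Jgr (False, False)"
  unfolding Kset_def Jgr_def by (simp add: cb_all)

lemma Jgr_par: "v \<in> Jgr \<beta> \<Longrightarrow> par0 v \<in> Jgr \<beta>" "v \<in> Jgr \<beta> \<Longrightarrow> par1 v \<in> Jgr \<beta>"
  "u \<in> Jgr \<beta> \<Longrightarrow> v \<in> Jgr \<beta> \<Longrightarrow> (u::'z jck) + v \<in> Jgr \<beta>"
  unfolding Jgr_iff par0_def par1_def by (simp_all add: cb_all)

lemma Der00_split: assumes "D \<in> Der00 sc \<delta>"
  obtains D0 D1 where "D = D0 + D1" "is_sder sc \<delta> UNIV False D0" "is_sder sc \<delta> UNIV True D1"
    "\<And>\<beta> v. v \<in> Jgr \<beta> \<Longrightarrow> D0 v \<in> Jgr \<beta>" "\<And>\<beta> v. v \<in> Jgr \<beta> \<Longrightarrow> D1 v \<in> Jgr \<beta>"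
proof -
  from assms obtain D0 D1 where D: "D = D0 + D1" and S0: "is_sder sc \<delta> UNIV False D0"
    and S1: "is_sder sc \<delta> UNIV True D1" and G: "\<And>\<beta> v. v \<in> Jgr \<beta> \<Longrightarrow> D v \<in> Jgr \<beta>"
    unfolding Der00_def Der_def by blast
  have e0: "D0 v = par0 (D (par0 v)) + par1 (D (par1 v))" for v
  proof -
    have a: "D0 (par0 v) \<in> Jpar False" "D1 (par0 v) \<in> Jpar True" "D0 (par1 v) \<in> Jpar True" "D1 (par1 v) \<in> Jpar False"
      using sder_par[OF S0, of "par0 v" False] sder_par[OF S1, of "par0 v" False]
        sder_par[OF S0, of "par1 v" True] sder_par[OF S1, of "par1 v" True] by auto
    have "D0 (par0 v + par1 v) = D0 (par0 v) + D0 (par1 v)" by (rule sder_add[OF S0])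
    then have "D0 v = D0 (par0 v) + D0 (par1 v)" by (simp only: par_split[symmetric])
    then show ?thesis using a by (simp add: D par_lin par_id)
  qed
  have e1: "D1 v = par1 (D (par0 v)) + par0 (D (par1 v))" for v
  proof -
    have a: "D0 (par0 v) \<in> Jpar False" "D1 (par0 v) \<in> Jpar True" "D0 (par1 v) \<in> Jpar True" "D1 (par1 v) \<in> Jpar False"
      using sder_par[OF S0, of "par0 v" False] sder_par[OF S1, of "par0 v" False]
        sder_par[OF S0, of "par1 v" True] sder_par[OF S1, of "par1 v" True] by auto
    have "D1 (par0 v + par1 v) = D1 (par0 v) + D1 (par1 v)" by (rule sder_add[OF S1])
    then have "D1 v = D1 (par0 v) + D1 (par1 v)" by (simp only: par_split[symmetric])
    then show ?thesis using a by (simp add: D par_lin par_id)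
  qed
  show ?thesis
  proof (rule that[OF D S0 S1])
    fix \<beta> and v :: "'z jck" assume "v \<in> Jgr \<beta>"
    then show "D0 v \<in> Jgr \<beta>" "D1 v \<in> Jgr \<beta>" unfolding e0 e1 by (auto intro!: Jgr_par G)
  qed
qed

lemma Kset_closed: "u \<in> Kset \<Longrightarrow> v \<in> Kset \<Longrightarrow> u + v \<in> Kset" "v \<in> Kset \<Longrightarrow> sJ sc c v \<in> Kset"
  "u \<in> Kset \<Longrightarrow> v \<in> Kset \<Longrightarrow> jmult \<delta> u v \<in> Kset"
  by (simp_all add: Kset_iff jmult_JM JM_def)

lemma res_sder: assumes D: "is_sder sc \<delta> UNIV p D" and K: "\<And>v. v \<in> Kset \<Longrightarrow> D v \<in> Kset"
  shows "is_sder sc \<delta> Kset p (res D)"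
proof -
  have L: "res D (jmult \<delta> a b) = jmult \<delta> (res D a) b + (if p \<and> q then - jmult \<delta> a (res D b) else jmult \<delta> a (res D b))"
    if "a \<in> Kset" "b \<in> Kset" "a \<in> Jpar q" for q a b
    unfolding res_def using sder_leib[OF D that(3), of b] that Kset_closed(3)[OF that(1,2)] by simp
  have A: "res D (u + v) = res D u + res D v" if "u \<in> Kset" "v \<in> Kset" for u v
    unfolding res_def using sder_add[OF D, of u v] that Kset_closed(1)[OF that] by simp
  have S: "res D (sJ sc c v) = sJ sc c (res D v)" if "v \<in> Kset" for c v
    unfolding res_def using sder_sJ[OF D, of c v] that Kset_closed(2)[OF that] by simp
  have P: "res D v \<in> Jpar (q \<noteq> p)" if "v \<in> Kset" "v \<in> Jpar q" for q v
    unfolding res_def using sder_par[OF D that(2)] that by simp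
  show ?thesis unfolding is_sder_def
    using L A S P K by (auto simp: res_def)
qed

lemma Dab0_gr: "v \<in> Jgr \<beta> \<Longrightarrow> Dab \<delta> 0 0 0 b v \<in> Jgr \<beta>"
  apply (cases \<beta>)
  subgoal for x y by (cases x; cases y; simp add: Jgr_iff cb_all Dab_def)
  done

definition Eph :: "('z \<Rightarrow> 'z) \<Rightarrow> 'z \<Rightarrow> 'z jck \<Rightarrow> 'z jck" where
  "Eph \<phi> q v = mk (\<phi> (v One)) (\<phi> (v (W I1))) (\<phi> (v (W I2))) (\<phi> (v (W I3))) (\<phi> (v X) + q * v X)
     (\<phi> (v (Xi I1)) - q * v (Xi I1)) (\<phi> (v (Xi I2)) - q * v (Xi I2)) (\<phi> (v (Xi I3)) - q * v (Xi I3))"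

lemma Eph_sder:
  assumes padd: "\<And>u v. \<phi> (u + v) = \<phi> u + \<phi> v" and psc: "\<And>c u. \<phi> (sc c u) = sc c (\<phi> u)"
    and pmul: "\<And>u v. \<phi> (u * v) = \<phi> u * v + u * \<phi> v" and pd: "\<And>u. \<phi> (\<delta> u) = \<delta> (\<phi> u) + 2 * q * \<delta> u"
  shows "is_sder sc \<delta> UNIV False (Eph \<phi> q)"
proof -
  have p0: "\<phi> 0 = 0" using padd[of 0 0] by simp
  have pm: "\<phi> (- u) = - \<phi> u" for u using padd[of u "-u"] p0 by (simp add: minus_unique)
  have pdf: "\<phi> (u - v) = \<phi> u - \<phi> v" for u v using padd[of u "-v"] pm by simp
  have p1: "\<phi> 1 = 0" using pmul[of 1 1] by simp
  have ps1: "\<phi> (sc c 1) = 0" for c using psc[of c 1] p1 by simp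
  note ps = padd pmul pd p0 pm pdf p1 ps1
  have A: "Eph \<phi> q (u + v) = Eph \<phi> q u + Eph \<phi> q v" for u v
    by (simp add: Eph_def fun_eq_cb ps algebra_simps)
  have S: "Eph \<phi> q (sJ sc c v) = sJ sc c (Eph \<phi> q v)" for c v
    apply (simp add: Eph_def fun_eq_cb del: sc_mult1)
    apply (simp add: scl ps algebra_simps del: sc_mult1)
    done
  have P: "Eph \<phi> q v \<in> Jpar r" if "v \<in> Jpar r" for v r
    using that by (cases r) (simp_all add: Jpar_True Jpar_False Eph_def ps)
  have L: "Eph \<phi> q (jmult \<delta> a c) = jmult \<delta> (Eph \<phi> q a) c + jmult \<delta> a (Eph \<phi> q c)" if "a \<in> Jpar r" for a c r
    using that
    apply (cases r)
     apply (simp_all add: Jpar_True Jpar_False jmult_JM JM_def Eph_def fun_eq_cb ps)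
     apply (simp_all add: algebra_simps)
    done
  show ?thesis unfolding is_sder_def using A S P L by simp
qed

lemma Jgr_diff: "u \<in> Jgr \<beta> \<Longrightarrow> v \<in> Jgr \<beta> \<Longrightarrow> (u::'z jck) - v \<in> Jgr \<beta>"
  unfolding Jgr_iff by simp

lemma gen_gr: "wg i \<in> Jgr (gr (W i))" "yg i \<in> Jgr (gr (Xi i))"
  by (cases i; simp add: Jgr_iff cb_all gsimps)+

lemma odd00: assumes D: "is_sder sc \<delta> UNIV True D" and G: "\<And>\<beta> v. v \<in> Jgr \<beta> \<Longrightarrow> D v \<in> Jgr \<beta>"
  shows "D = Dab \<delta> 0 0 0 (D (wg I1) (Xi I1))"
proof -
  have "D (wg i) X = 0" for i
    using G[OF gen_gr(1)[of i]] by (cases i) (simp_all add: Jgr_iff)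
  then show ?thesis using odd_struct[OF D] by simp
qed

lemma even00_zero: assumes E: "is_sder sc \<delta> UNIV False E" and G: "\<And>\<beta> v. v \<in> Jgr \<beta> \<Longrightarrow> E v \<in> Jgr \<beta>"
  and z: "\<And>f. E (zel f) = 0" and x: "E xel = 0"
  shows "E = 0"
proof -
  note L = sder_leib[OF E]
  have w: "E (wg i) = 0" for i
  proof -
    have g: "E (wg i) \<in> Jgr (gr (W i))" by (rule G[OF gen_gr(1)])
    have p: "E (wg i) \<in> Jpar False" using sder_par[OF E, of "wg i" False] by simp
    have "jmult \<delta> (wg i) (wg i) = zel (wsq i)" by (cases i; simp add: jcomp)
    then have e: "0 = jmult \<delta> (E (wg i)) (wg i) + jmult \<delta> (wg i) (E (wg i))"
      using L[of "wg i" False "wg i"] z by simp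
    show ?thesis
    proof (cases i)
      case I1
      then have "2 * E (wg i) (W i) = 0" using e g p by (simp add: jcomp Jgr_iff Jpar_False)
      then show ?thesis using g p I1 two_cancel by (simp add: Jgr_iff Jpar_False fun_eq_cb)
    next
      case I2
      then have "2 * E (wg i) (W i) = 0" using e g p by (simp add: jcomp Jgr_iff Jpar_False)
      then show ?thesis using g p I2 two_cancel by (simp add: Jgr_iff Jpar_False fun_eq_cb)
    next
      case I3
      then have "2 * E (wg i) (W i) = 0" using e g p by (simp add: jcomp Jgr_iff Jpar_False)
      then show ?thesis using g p I3 two_cancel by (simp add: Jgr_iff Jpar_False fun_eq_cb)
    qed
  qed
  have y: "E (yg i) = 0" for i
  proof -
    have g: "E (yg i) \<in> Jgr (gr (Xi i))" by (rule G[OF gen_gr(2)])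
    have p: "E (yg i) \<in> Jpar True" using sder_par[OF E, of "yg i" True] by simp
    have "jmult \<delta> xel (yg i) = - wg i" by (cases i; simp add: jcomp)
    then have e: "0 = jmult \<delta> xel (E (yg i))"
      using L[of xel True "yg i"] x w sder_neg[OF E] by simp
    show ?thesis using e g p by (cases i; simp add: jcomp Jgr_iff Jpar_True)
  qed
  show ?thesis by (rule gen_zero[OF E]) (auto simp: z w x y)
qed

lemma Eph_gr: assumes "\<phi> 0 = 0" shows "v \<in> Jgr \<beta> \<Longrightarrow> Eph \<phi> q v \<in> Jgr \<beta>"
  apply (cases \<beta>)
  subgoal for a b by (cases a; cases b; simp add: Jgr_iff cb_all Eph_def assms)
  done

lemma ks_out: "is_sder sc \<delta> Kset p d \<Longrightarrow> v \<notin> Kset \<Longrightarrow> d v = 0" unfolding is_sder_def by blast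
lemma ks_in: "is_sder sc \<delta> Kset p d \<Longrightarrow> v \<in> Kset \<Longrightarrow> d v \<in> Kset" unfolding is_sder_def by blast
lemma ks_add: "is_sder sc \<delta> Kset p d \<Longrightarrow> u \<in> Kset \<Longrightarrow> v \<in> Kset \<Longrightarrow> d (u + v) = d u + d v"
  unfolding is_sder_def by blast
lemma ks_sJ: "is_sder sc \<delta> Kset p d \<Longrightarrow> v \<in> Kset \<Longrightarrow> d (sJ sc c v) = sJ sc c (d v)"
  unfolding is_sder_def by blast
lemma ks_par: "is_sder sc \<delta> Kset p d \<Longrightarrow> v \<in> Kset \<Longrightarrow> v \<in> Jpar q \<Longrightarrow> d v \<in> Jpar (q \<noteq> p)"
  unfolding is_sder_def by blast
lemma ks_leib: "is_sder sc \<delta> Kset p d \<Longrightarrow> a \<in> Kset \<Longrightarrow> b \<in> Kset \<Longrightarrow> a \<in> Jpar q \<Longrightarrow>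
   d (jmult \<delta> a b) = jmult \<delta> (d a) b + (if p \<and> q then - jmult \<delta> a (d b) else jmult \<delta> a (d b))"
  unfolding is_sder_def by blast

lemma gen_K[simp]: "zel f \<in> Kset" "xel \<in> Kset" "single X f \<in> Kset"
  by (simp_all add: Kset_iff gsimps)

lemma K_decomp: "(v::'z jck) \<in> Kset \<Longrightarrow> v = zel (v One) + single X (v X)"
  by (simp add: Kset_iff gsimps fun_eq_cb)

lemma res_plus: "res (D0 + D1) = res D0 + (res D1 :: 'z jck \<Rightarrow> 'z jck)" by (simp add: res_def fun_eq_iff)

lemma Dab0_gen: "Dab \<delta> 0 0 0 b xel = zel (- b)" "Dab \<delta> 0 0 0 b (zel f) = 0"
  by (simp_all add: Dab_def gsimps fun_eq_cb)

lemma part2_img: assumes "D \<in> Der00 sc \<delta>" shows "res D \<in> Derbar sc \<delta>"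
proof -
  obtain D0 D1 where D: "D = D0 + D1" and S0: "is_sder sc \<delta> UNIV False D0" and S1: "is_sder sc \<delta> UNIV True D1"
    and G0: "\<And>\<beta> v. v \<in> Jgr \<beta> \<Longrightarrow> D0 v \<in> Jgr \<beta>" and G1: "\<And>\<beta> v. v \<in> Jgr \<beta> \<Longrightarrow> D1 v \<in> Jgr \<beta>"
    using Der00_split[OF assms] by metis
  have K0: "D0 v \<in> Kset" if "v \<in> Kset" for v using G0 that unfolding Kset_Jgr by blast
  have K1: "D1 v \<in> Kset" if "v \<in> Kset" for v using G1 that unfolding Kset_Jgr by blast
  define b where "b = D1 (wg I1) (Xi I1)"
  have D1: "D1 = Dab \<delta> 0 0 0 b" unfolding b_def by (rule odd00[OF S1 G1])
  have r1: "res D1 (zel f) = 0" for f by (simp add: res_def D1 Dab0_gen)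
  have r2: "res D1 xel = zel (- b)" by (simp add: res_def D1 Dab0_gen)
  have "is_eta sc \<delta> (- b) (res D1)"
    unfolding is_eta_def using res_sder[OF S1 K1] r1 r2 by simp
  moreover have "is_sder sc \<delta> Kset False (res D0)" by (rule res_sder[OF S0 K0])
  ultimately show ?thesis unfolding Derbar_def D res_plus by blast
qed

lemma part2_inj: assumes A: "D \<in> Der00 sc \<delta>" and B: "D' \<in> Der00 sc \<delta>" and R: "res D = res D'"
  shows "D = D'"
proof -
  obtain D0 D1 where D: "D = D0 + D1" and S0: "is_sder sc \<delta> UNIV False D0" and S1: "is_sder sc \<delta> UNIV True D1"
    and G0: "\<And>\<beta> v. v \<in> Jgr \<beta> \<Longrightarrow> D0 v \<in> Jgr \<beta>" and G1: "\<And>\<beta> v. v \<in> Jgr \<beta> \<Longrightarrow> D1 v \<in> Jgr \<beta>"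
    using Der00_split[OF A] by metis
  obtain D0' D1' where D': "D' = D0' + D1'" and S0': "is_sder sc \<delta> UNIV False D0'" and S1': "is_sder sc \<delta> UNIV True D1'"
    and G0': "\<And>\<beta> v. v \<in> Jgr \<beta> \<Longrightarrow> D0' v \<in> Jgr \<beta>" and G1': "\<And>\<beta> v. v \<in> Jgr \<beta> \<Longrightarrow> D1' v \<in> Jgr \<beta>"
    using Der00_split[OF B] by metis
  have eqK: "D0 v + D1 v = D0' v + D1' v" if "v \<in> Kset" for v
    using fun_cong[OF R, of v] that by (simp add: res_def D D')
  define b where "b = D1 (wg I1) (Xi I1)"
  define b' where "b' = D1' (wg I1) (Xi I1)"
  have E1: "D1 = Dab \<delta> 0 0 0 b" unfolding b_def by (rule odd00[OF S1 G1])
  have E1': "D1' = Dab \<delta> 0 0 0 b'" unfolding b'_def by (rule odd00[OF S1' G1'])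
  have px: "D0 xel \<in> Jpar True" "D0' xel \<in> Jpar True"
    using sder_par[OF S0, of xel True] sder_par[OF S0', of xel True] by simp_all
  have "par0 (D0 xel + D1 xel) = par0 (D0' xel + D1' xel)" using eqK[of xel] by simp
  then have "zel (- b) = zel (- b')" using px by (simp add: par_lin par_id E1 E1' Dab0_gen)
  then have "zel (- b) One = zel (- b') One" by simp
  then have "b = b'" by (simp add: zel_def single_def)
  then have e1: "D1 = D1'" using E1 E1' by simp
  have ES: "is_sder sc \<delta> UNIV False (D0 - D0')" by (rule sder_diff[OF S0 S0'])
  have EG: "(D0 - D0') v \<in> Jgr \<beta>" if "v \<in> Jgr \<beta>" for \<beta> v using G0[OF that] G0'[OF that] by (simp add: Jgr_diff)
  have "D0 - D0' = 0"
  proof (rule even00_zero[OF ES EG])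
    show "(D0 - D0') (zel f) = 0" for f using eqK[of "zel f"] e1 by simp
    show "(D0 - D0') xel = 0" using eqK[of xel] e1 by simp
  qed
  then show ?thesis using D D' e1 by simp
qed

lemma part2_surj: assumes d0: "is_sder sc \<delta> Kset False d0" and e: "is_eta sc \<delta> a e"
  shows "d0 + e \<in> res ` Der00 sc \<delta>"
proof -
  have eS: "is_sder sc \<delta> Kset True e" and e1: "\<And>f. e (zel f) = 0" and e2: "e xel = zel a"
    using e unfolding is_eta_def by auto
  define \<phi> where "\<phi> f = d0 (zel f) One" for f
  define q where "q = d0 xel X"
  have F1: "d0 (zel f) = zel (\<phi> f)" for f
    using ks_in[OF d0, of "zel f"] ks_par[OF d0, of "zel f" False]
    by (simp add: \<phi>_def fun_eq_cb Kset_iff Jpar_False zel_def single_def)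
  have F2: "d0 xel = single X q"
    using ks_in[OF d0, of xel] ks_par[OF d0, of xel True]
    by (simp add: q_def fun_eq_cb Kset_iff Jpar_True gsimps)
  have F3: "d0 (single X g) = single X (\<phi> g + g * q)" for g
  proof -
    have "jmult \<delta> (zel g) xel = single X g" by (simp add: jcomp)
    then have "d0 (single X g) = jmult \<delta> (d0 (zel g)) xel + jmult \<delta> (zel g) (d0 xel)"
      using ks_leib[OF d0, of "zel g" xel False] by simp
    then show ?thesis unfolding F1 F2 by (simp add: jcomp)
  qed
  have F4: "d0 v = mk (\<phi> (v One)) 0 0 0 (\<phi> (v X) + v X * q) 0 0 0" if "v \<in> Kset" for v
  proof -
    have "d0 v = d0 (zel (v One)) + d0 (single X (v X))"
      using ks_add[OF d0, of "zel (v One)" "single X (v X)"] K_decomp[OF that] by simp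
    then show ?thesis unfolding F1 F3 by (simp add: gsimps fun_eq_cb)
  qed
  have padd: "\<phi> (u + v) = \<phi> u + \<phi> v" for u v
  proof -
    have "zel (u + v) = zel u + zel v" by (simp add: gsimps fun_eq_cb)
    then have "d0 (zel (u + v)) = d0 (zel u) + d0 (zel v)" using ks_add[OF d0, of "zel u" "zel v"] by simp
    then show ?thesis unfolding F1 by (simp add: gsimps fun_eq_cb)
  qed
  have psc: "\<phi> (sc c u) = sc c (\<phi> u)" for c u
  proof -
    have "zel (sc c u) = sJ sc c (zel u)" by (simp add: gsimps fun_eq_cb)
    then have "d0 (zel (sc c u)) = sJ sc c (d0 (zel u))" using ks_sJ[OF d0, of "zel u" c] by simp
    then show ?thesis unfolding F1 by (simp add: gsimps fun_eq_cb)
  qed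
  have pmul: "\<phi> (u * v) = \<phi> u * v + u * \<phi> v" for u v
  proof -
    have "jmult \<delta> (zel u) (zel v) = zel (u * v)" by (simp add: jcomp)
    then have "d0 (zel (u * v)) = jmult \<delta> (d0 (zel u)) (zel v) + jmult \<delta> (zel u) (d0 (zel v))"
      using ks_leib[OF d0, of "zel u" "zel v" False] by simp
    then show ?thesis unfolding F1 by (simp add: jcomp)
  qed
  have pd: "\<phi> (\<delta> u) = \<delta> (\<phi> u) + 2 * q * \<delta> u" for u
  proof -
    have "jmult \<delta> (single X u) xel = zel (\<delta> u)" by (simp add: jcomp)
    then have "d0 (zel (\<delta> u)) = jmult \<delta> (d0 (single X u)) xel + jmult \<delta> (single X u) (d0 xel)"
      using ks_leib[OF d0, of "single X u" xel True] by simp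
    then have "\<phi> (\<delta> u) = \<delta> (\<phi> u + u * q) + \<delta> u * q - u * \<delta> q"
      unfolding F1 F2 F3 by (simp add: jcomp)
    then show ?thesis by (simp add: algebra_simps mult_2)
  qed
  have E3: "e v = zel (v X * a)" if "v \<in> Kset" for v
  proof -
    have "e v = e (zel (v One)) + e (single X (v X))"
      using ks_add[OF eS, of "zel (v One)" "single X (v X)"] K_decomp[OF that] by simp
    moreover
    have j: "jmult \<delta> (zel (v X)) xel = single X (v X)" by (simp add: jcomp)
    have "e (single X (v X)) = jmult \<delta> (e (zel (v X))) xel + jmult \<delta> (zel (v X)) (e xel)"
      using ks_leib[OF eS, of "zel (v X)" xel False] j by simp
    then have "e (single X (v X)) = zel (v X * a)" unfolding e1 e2 by (simp add: jcomp)
    ultimately show ?thesis using e1 by simp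
  qed
  have p0: "\<phi> 0 = 0" using padd[of 0 0] by simp
  define D where "D = Eph \<phi> q + Dab \<delta> 0 0 0 (- a)"
  have S0: "is_sder sc \<delta> UNIV False (Eph \<phi> q)" by (rule Eph_sder[OF padd psc pmul pd])
  have S1: "is_sder sc \<delta> UNIV True (Dab \<delta> 0 0 0 (- a))" by (rule Dab_sder)
  have "D \<in> Der sc \<delta> UNIV" unfolding Der_def D_def using S0 S1 by blast
  moreover have "D v \<in> Jgr \<beta>" if "v \<in> Jgr \<beta>" for \<beta> v
    unfolding D_def using Eph_gr[where \<phi>=\<phi> and q=q, OF p0 that] Dab0_gr[OF that] by (simp add: Jgr_par(3))
  ultimately have DD: "D \<in> Der00 sc \<delta>" unfolding Der00_def by blast
  have "res D = d0 + e"
  proof (rule ext)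
    fix v :: "'z jck"
    show "res D v = (d0 + e) v"
    proof (cases "v \<in> Kset")
      case True
      then show ?thesis using F4[OF True] E3[OF True]
        by (simp add: res_def D_def Eph_def Dab_def Kset_iff gsimps fun_eq_cb p0 algebra_simps)
    next
      case False
      then show ?thesis using ks_out[OF d0 False] ks_out[OF eS False] by (simp add: res_def)
    qed
  qed
  then show ?thesis using DD by (metis image_eqI)
qed

lemma part2: "inj_on res (Der00 sc \<delta>) \<and> res ` Der00 sc \<delta> = Derbar sc \<delta>"
proof (intro conjI)
  show "inj_on res (Der00 sc \<delta>)" unfolding inj_on_def using part2_inj by blast
  show "res ` Der00 sc \<delta> = Derbar sc \<delta>"
  proof
    show "res ` Der00 sc \<delta> \<subseteq> Derbar sc \<delta>" using part2_img by blast
    show "Derbar sc \<delta> \<subseteq> res ` Der00 sc \<delta>" unfolding Derbar_def using part2_surj by blast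
  qed
qed

lemma sum_fun_apply: "(sum f A) x = (\<Sum>a\<in>A. f a x)"
  by (induct A rule: infinite_finite_induct) auto

definition og :: "nat \<Rightarrow> cb" where
  "og k = (if k = 0 then X else if k = 1 then Xi I1 else if k = 2 then Xi I2 else Xi I3)"

definition Phi :: "'z jck \<Rightarrow> ('z jck \<Rightarrow> 'z jck)" where
  "Phi v = Dab \<delta> (v (Xi I1)) (v (Xi I2)) (v (Xi I3)) (v X)"

lemma mh_single: "module_hom sc (sJ sc) (single e)"
  unfolding module_hom_iff module_iff_vector_space using vs vs_sJ
  by (simp add: single_def fun_eq_iff Z.scale_right_distrib)

lemma mh_Phi: "module_hom (sJ sc) (sE sc) Phi"
  unfolding module_hom_iff module_iff_vector_space using vs_sJ vs_sE
  apply (intro conjI allI, simp_all)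
   apply (rule ext, simp add: Phi_def Dab_def fun_eq_cb algebra_simps)
  apply (rule ext)
  apply (simp add: Phi_def Dab_def fun_eq_cb sE_def del: sc_mult1)
  apply (simp add: scl algebra_simps del: sc_mult1)
  done

lemma Phi_inj: assumes "v \<in> Jpar True" "w \<in> Jpar True" "Phi v = Phi w" shows "v = w"
proof -
  have "Phi v (wg i) = Phi w (wg i)" for i using assms(3) by simp
  then have "Phi v (wg i) k = Phi w (wg i) k" for i k by simp
  from this[of I1 X] this[of I2 X] this[of I3 X] this[of I1 "Xi I1"] assms(1,2)
  show ?thesis by (simp add: Phi_def Dab_def gsimps fun_eq_cb Jpar_True)
qed

lemma Jpar_subspace: "J.subspace (Jpar True)"
  unfolding J.subspace_def by (simp add: Jpar_add Jpar_sJ)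

lemma V_subspace: "E.subspace {D. is_sder sc \<delta> UNIV True D}"
  unfolding E.subspace_def by (simp add: sder_zero sder_plus sder_sE)

lemma og_inj: "k < 4 \<Longrightarrow> k' < 4 \<Longrightarrow> og k = og k' \<Longrightarrow> k = k'"
  unfolding og_def by (auto split: if_splits)

lemma og_odd: "k < 4 \<Longrightarrow> single (og k) z \<in> Jpar True"
  unfolding og_def by auto

lemma part3: "\<exists>B BZ BJ. is_basis_of (sE sc) {D. is_sder sc \<delta> UNIV True D} B
            \<and> is_basis_of sc UNIV BZ \<and> is_basis_of (sJ sc) (Jpar True) BJ
            \<and> B \<approx> {..<4::nat} \<times> BZ \<and> BJ \<approx> {..<4::nat} \<times> BZ"
proof -
  obtain BZ where BZi: "Z.independent BZ" and BZs: "UNIV \<subseteq> Z.span BZ"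
    using Z.basis_exists[of UNIV] by blast
  have BZspan: "Z.span BZ = UNIV" using BZs by blast
  have nz: "0 \<notin> BZ" using BZi Z.dependent_zero by blast
  define f where "f = (\<lambda>(k, z). single (og k) (z::'z))"
  define BJ where "BJ = f ` ({..<4::nat} \<times> BZ)"
  have finj: "inj_on f ({..<4::nat} \<times> BZ)"
  proof (rule inj_onI)
    fix p p' assume p: "p \<in> {..<4::nat} \<times> BZ" and p': "p' \<in> {..<4::nat} \<times> BZ" and e: "f p = f p'"
    obtain k z k' z' where pp: "p = (k, z)" "p' = (k', z')" by (cases p, cases p')
    have "single (og k) z (og k) = single (og k') z' (og k)" using e pp f_def by simp
    then have 1: "z = (if og k = og k' then z' else 0)" by (simp add: single_def)
    have "z \<noteq> 0" using p pp nz by auto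
    then have "og k = og k'" "z = z'" using 1 by (auto split: if_splits)
    then show "p = p'" using og_inj p p' pp by auto
  qed
  have BJsub: "BJ \<subseteq> Jpar True" unfolding BJ_def f_def using og_odd by auto
  have BJind: "J.independent BJ"
    unfolding J.independent_explicit_module
  proof (intro allI impI)
    fix t u v0 assume t: "finite t" "t \<subseteq> BJ" and s0: "(\<Sum>v\<in>t. sJ sc (u v) v) = 0" and v0: "v0 \<in> t"
    obtain k0 z0 where k0: "k0 < 4" "z0 \<in> BZ" "v0 = single (og k0) z0"
      using v0 t(2) unfolding BJ_def f_def by auto
    define e0 where "e0 = og k0"
    define g where "g = (\<lambda>z::'z. single e0 z)"
    have ginj: "inj g" unfolding g_def inj_def single_def by (metis (full_types))
    define T where "T = {z \<in> BZ. g z \<in> t}"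
    have tT: "{v \<in> t. \<exists>z. v = g z} = g ` T"
    proof
      show "g ` T \<subseteq> {v \<in> t. \<exists>z. v = g z}" unfolding T_def by auto
      show "{v \<in> t. \<exists>z. v = g z} \<subseteq> g ` T"
      proof
        fix v assume "v \<in> {v \<in> t. \<exists>z. v = g z}"
        then obtain z where vz: "v \<in> t" "v = g z" by auto
        then obtain k z' where kz: "z' \<in> BZ" "v = single (og k) z'" using t(2) unfolding BJ_def f_def by auto
        have "g z (og k) = single (og k) z' (og k)" using vz kz by simp
        then have "g z (og k) = z'" by (simp add: single_def)
        then have "z' = (if og k = e0 then z else 0)" by (simp add: g_def single_def)
        moreover have "z' \<noteq> 0" using kz nz by auto
        ultimately have "z = z'" by (auto split: if_splits)
        then show "v \<in> g ` T" using vz kz unfolding T_def by auto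
      qed
    qed
    have Tfin: "finite T"
    proof -
      have "finite (g ` T)" using tT t(1) by (metis (no_types, lifting) finite_subset mem_Collect_eq subsetI)
      then show ?thesis using ginj by (simp add: finite_image_iff inj_on_subset)
    qed
    have "(\<Sum>v\<in>t. sJ sc (u v) v) e0 = 0" using s0 by simp
    then have "(\<Sum>v\<in>t. sc (u v) (v e0)) = 0" by (simp add: sum_fun_apply)
    moreover have "(\<Sum>v\<in>t. sc (u v) (v e0)) = (\<Sum>v\<in>{v \<in> t. \<exists>z. v = g z}. sc (u v) (v e0))"
    proof (rule sum.mono_neutral_right)
      show "finite t" by (rule t(1))
      show "{v \<in> t. \<exists>z. v = g z} \<subseteq> t" by auto
      show "\<forall>v\<in>t - {v \<in> t. \<exists>z. v = g z}. sc (u v) (v e0) = 0"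
      proof
        fix v assume "v \<in> t - {v \<in> t. \<exists>z. v = g z}"
        then have v1: "v \<in> t" "\<forall>z. v \<noteq> single e0 z" unfolding g_def by auto
        then obtain k z where kz: "v = single (og k) z" using t(2) unfolding BJ_def f_def by auto
        then have "og k \<noteq> e0" using v1 by auto
        with kz obtain k z where "v = single (og k) z" "og k \<noteq> e0" by blast
        then show "sc (u v) (v e0) = 0" by (simp add: single_def)
      qed
    qed
    moreover have "(\<Sum>v\<in>g ` T. sc (u v) (v e0)) = (\<Sum>z\<in>T. sc (u (g z)) z)"
      by (subst sum.reindex[OF inj_on_subset[OF ginj subset_UNIV]]) (simp add: g_def single_def)
    ultimately have "(\<Sum>z\<in>T. sc (u (g z)) z) = 0" using tT by simp
    moreover have "z0 \<in> T" using k0 v0 unfolding T_def g_def e0_def by simp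
    moreover have "T \<subseteq> BZ" unfolding T_def by auto
    ultimately have "u (g z0) = 0" using Z.independentD[OF BZi Tfin, of "\<lambda>z. u (g z)" z0] by simp
    then show "u v0 = 0" using k0 unfolding g_def e0_def by simp
  qed
  have BJspan: "J.span BJ = Jpar True"
  proof
    show "J.span BJ \<subseteq> Jpar True" by (rule J.span_minimal[OF BJsub Jpar_subspace])
    show "Jpar True \<subseteq> J.span BJ"
    proof
      fix v :: "'z jck" assume v: "v \<in> Jpar True"
      have s: "single (og k) z \<in> J.span BJ" if "k < 4" for k z
      proof -
        have "single (og k) ` UNIV \<subseteq> J.span (single (og k) ` BZ)"
          using module_hom.spans_image[OF mh_single BZs] .
        moreover have "J.span (single (og k) ` BZ) \<subseteq> J.span BJ"
          using that by (intro J.span_mono) (auto simp: BJ_def f_def)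
        ultimately show ?thesis by blast
      qed
      have "v = single (og 0) (v X) + single (og 1) (v (Xi I1)) + single (og 2) (v (Xi I2)) + single (og 3) (v (Xi I3))"
        using v by (simp add: og_def single_def fun_eq_cb Jpar_True)
      also have "\<dots> \<in> J.span BJ" by (intro J.span_add s) simp_all
      finally show "v \<in> J.span BJ" .
    qed
  qed
  define B where "B = Phi ` BJ"
  have Phiinj: "inj_on Phi (J.span BJ)" unfolding BJspan using Phi_inj by (meson inj_onI)
  have Bind: "E.independent B" unfolding B_def
    by (rule module_hom.independent_injective_image[OF mh_Phi BJind Phiinj])
  have Bsub: "B \<subseteq> {D. is_sder sc \<delta> UNIV True D}" unfolding B_def Phi_def using Dab_sder by auto
  have Bspan: "E.span B = {D. is_sder sc \<delta> UNIV True D}"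
  proof
    show "E.span B \<subseteq> {D. is_sder sc \<delta> UNIV True D}" by (rule E.span_minimal[OF Bsub V_subspace])
    show "{D. is_sder sc \<delta> UNIV True D} \<subseteq> E.span B"
    proof
      fix D assume "D \<in> {D. is_sder sc \<delta> UNIV True D}"
      then have D: "is_sder sc \<delta> UNIV True D" by simp
      define w where "w = mk 0 0 0 0 (D (wg I1) (Xi I1)) (D (wg I1) X) (D (wg I2) X) (D (wg I3) X)"
      have w: "w \<in> J.span BJ" unfolding BJspan w_def by (simp add: Jpar_True)
      have "D = Phi w" using odd_struct[OF D] by (simp add: Phi_def w_def)
      then show "D \<in> E.span B" using module_hom.spans_image[OF mh_Phi, of "J.span BJ" BJ] w
        unfolding B_def by blast
    qed
  qed
  have eq1: "BJ \<approx> {..<4::nat} \<times> BZ" unfolding BJ_def by (rule inj_on_image_eqpoll_self[OF finj])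
  have "B \<approx> BJ" unfolding B_def
    by (rule inj_on_image_eqpoll_self) (rule inj_on_subset[OF Phiinj J.span_superset])
  then have eq2: "B \<approx> {..<4::nat} \<times> BZ" using eq1 eqpoll_trans by blast
  show ?thesis
    unfolding is_basis_of_def
    using Bsub Bind Bspan BZi BZspan BJsub BJind BJspan eq1 eq2 by blast
qed

end

theorem corollary4p4:
  fixes sc :: "'f::field \<Rightarrow> 'z::comm_ring_1 \<Rightarrow> 'z" and \<delta> :: "'z \<Rightarrow> 'z"
  assumes "(2::'f) \<noteq> 0"
    and "vector_space sc"
    and "\<forall>c u v. sc c (u * v) = sc c u * v"
    and "\<forall>u v. \<delta> (u + v) = \<delta> u + \<delta> v"
    and "\<forall>c u. \<delta> (sc c u) = sc c (\<delta> u)"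
    and "\<forall>u v. \<delta> (u * v) = \<delta> u * v + u * \<delta> v"
    and "module.span sc {f * \<delta> g | f g. True} = UNIV"
  shows "({D. is_sder sc \<delta> UNIV True D} = Inder sc \<delta> \<inter> {D. odd_map D})
    \<and> (inj_on res (Der00 sc \<delta>) \<and> res ` Der00 sc \<delta> = Derbar sc \<delta>)
    \<and> (\<exists>B BZ BJ. is_basis_of (sE sc) {D. is_sder sc \<delta> UNIV True D} B
            \<and> is_basis_of sc UNIV BZ \<and> is_basis_of (sJ sc) (Jpar True) BJ
            \<and> B \<approx> {..<4::nat} \<times> BZ \<and> BJ \<approx> {..<4::nat} \<times> BZ)"
proof -
  have "jck sc \<delta>" unfolding jck_def using assms by blast
  then interpret jck sc \<delta> .
  show ?thesis using part1 part2 part3 by blast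
qed

end
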